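(* Consider $K$ arms with reward distributions supported on $[0,1]$, labeled so that $\sigma_1^2>\sigma_2^2\ge\dots\ge\sigma_K^2$ (arm $1=*$ is the unique arm of maximal variance), with gaps $\delta_i=\sigma_1^2-\sigma_i^2$. Run the sequential halving algorithm SHVV with budget $n$: starting from the set of all arms, for $\lceil\log_2 K\rceil$ rounds, every arm in the current set $A_r$ is pulled $t_r=\frac{n}{|A_r|\log_2 K}$ times, the empirical variance of these $t_r$ rewards is computed for each arm, and the $\lceil|A_r|/2\rceil$ arms with largest empirical variance form $A_{r+1}$; the single remaining arm $J_n$ is output. Let $e_n=\mathbb{P}(J_n\ne * )$ and $H_2=\max_{i\ne *}\frac{i}{\delta_i^2}$. Then $$e_n\le 3\log_2(K)\exp\Big(\frac{-(n-K\log_2 K)^2}{8\,n\log_2(K)\,H_2}\Big).$$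
   Context: Rewards are independent across arms and pulls. The empirical variance is the sample variance of the round's samples. *)

theory Defs
  imports "HOL-Probability.Probability"
begin

text \<open>Arms are labelled 1..K. Reward distribution of arm i is D i (a measure on the reals).
  Outside 1..K we put a dummy point mass so the product measure is well defined.\<close>
definition arm_dist :: "nat \<Rightarrow> (nat \<Rightarrow> real measure) \<Rightarrow> nat \<Rightarrow> real measure" where
  "arm_dist K D i = (if i \<in> {1..K} then D i else return borel 0)"

definition arm_var :: "(nat \<Rightarrow> real measure) \<Rightarrow> nat \<Rightarrow> real" where
  "arm_var D i = (\<integral>x. (x - (\<integral>y. y \<partial>D i))\<^sup>2 \<partial>D i)"

text \<open>Sample space: omega (r, i, j) is the j-th reward of arm i in round r; all independent.\<close>
definition sample_space :: "nat \<Rightarrow> (nat \<Rightarrow> real measure) \<Rightarrow> (nat \<times> nat \<times> nat \<Rightarrow> real) measure" where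
  "sample_space K D = (\<Pi>\<^sub>M idx\<in>UNIV. arm_dist K D (fst (snd idx)))"

definition emp_var :: "(nat \<Rightarrow> real) \<Rightarrow> nat \<Rightarrow> real" where
  "emp_var x t = (if t \<le> 1 then 0 else
     (let m = (\<Sum>j<t. x j) / real t in (\<Sum>j<t. (x j - m)\<^sup>2) / (real t - 1)))"

text \<open>Keep the ceil(|A|/2) arms of largest empirical variance v; ties are broken against
  the arm of smaller index (i.e. against the optimal arm 1).\<close>
definition halve :: "nat set \<Rightarrow> (nat \<Rightarrow> real) \<Rightarrow> nat set" where
  "halve A v = {i \<in> A. card {j \<in> A. v i < v j \<or> (v j = v i \<and> i < j)} < (card A + 1) div 2}"

definition pulls :: "nat \<Rightarrow> nat \<Rightarrow> nat \<Rightarrow> nat" where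
  "pulls K n m = nat \<lfloor>real n / (real m * log 2 (real K))\<rfloor>"

primrec shvv_set :: "nat \<Rightarrow> nat \<Rightarrow> (nat \<times> nat \<times> nat \<Rightarrow> real) \<Rightarrow> nat \<Rightarrow> nat set" where
  "shvv_set K n \<omega> 0 = {1..K}"
| "shvv_set K n \<omega> (Suc r) =
     (let A = shvv_set K n \<omega> r
      in halve A (\<lambda>i. emp_var (\<lambda>j. \<omega> (r, i, j)) (pulls K n (card A))))"

definition shvv_out :: "nat \<Rightarrow> nat \<Rightarrow> (nat \<times> nat \<times> nat \<Rightarrow> real) \<Rightarrow> nat" where
  "shvv_out K n \<omega> = Min (shvv_set K n \<omega> (nat \<lceil>log 2 (real K)\<rceil>))"

end

theory Submission
  imports Defs
begin

locale shvv =
  fixes K :: nat and D :: "nat \<Rightarrow> real measure"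
  assumes K2: "K \<ge> 2"
    and prob: "\<And>i. i \<in> {1..K} \<Longrightarrow> prob_space (D i)"
    and borel: "\<And>i. i \<in> {1..K} \<Longrightarrow> sets (D i) = sets borel"
    and supp: "\<And>i. i \<in> {1..K} \<Longrightarrow> AE x in D i. x \<in> {0..1}"
begin

lemma Q_prob: "prob_space (arm_dist K D i)"
  using prob by (auto simp: arm_dist_def prob_space_return)

lemma Q_sets: "sets (arm_dist K D i) = sets borel"
  using borel by (auto simp: arm_dist_def)

lemma Q_meas_eq: "measurable N (arm_dist K D i) = measurable N borel"
  by (rule measurable_cong_sets[OF refl Q_sets])

lemma Q_space: "space (arm_dist K D i) = UNIV"
  using sets_eq_imp_space_eq[OF Q_sets[of i]] by simp

lemma Q_AE: "AE x in arm_dist K D i. x \<in> {0..1}"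
proof (cases "i \<in> {1..K}")
  case True then show ?thesis using supp[of i] unfolding arm_dist_def by simp
next
  case False then show ?thesis unfolding arm_dist_def by (auto simp: AE_return)
qed

lemma M_prob: "prob_space (sample_space K D)"
  unfolding sample_space_def by (rule prob_space_PiM) (rule Q_prob)

lemma M_space: "space (sample_space K D) = UNIV"
  unfolding sample_space_def by (auto simp: space_PiM Q_space)

end

sublocale shvv \<subseteq> Mp: prob_space "sample_space K D" by (rule M_prob)

context shvv begin
abbreviation "M \<equiv> sample_space K D"

lemma coord_meas[measurable]: "(\<lambda>\<omega>. \<omega> idx) \<in> borel_measurable M"
proof -
  have "(\<lambda>\<omega>. \<omega> idx) \<in> measurable M (arm_dist K D (fst (snd idx)))"
    unfolding sample_space_def by (rule measurable_component_singleton) simp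
  then show ?thesis using measurable_cong_sets[OF refl Q_sets] by blast
qed

lemma coord_indep: "Mp.indep_vars (\<lambda>_. borel) (\<lambda>idx \<omega>. \<omega> idx) UNIV"
proof -
  have "Mp.indep_vars (\<lambda>idx. arm_dist K D (fst (snd idx))) (\<lambda>idx \<omega>. \<omega> idx) UNIV"
  proof (subst Mp.indep_vars_iff_distr_eq_PiM)
    show "(\<lambda>\<omega>. \<omega> i) \<in> measurable M (arm_dist K D (fst (snd i)))" for i
      unfolding sample_space_def by (rule measurable_component_singleton) simp
    have "distr M (\<Pi>\<^sub>M i\<in>UNIV. arm_dist K D (fst (snd i))) (\<lambda>x. \<lambda>i\<in>UNIV. x i) = M"
      unfolding sample_space_def
      using distr_PiM_reindex[of UNIV "\<lambda>i. arm_dist K D (fst (snd i))" id UNIV] Q_prob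
      by simp
    also have "M = (\<Pi>\<^sub>M i\<in>UNIV. distr M (arm_dist K D (fst (snd i))) (\<lambda>x. x i))"
      unfolding sample_space_def
      by (intro PiM_cong refl distr_PiM_component[symmetric]) (auto intro: Q_prob)
    finally show "distr M (\<Pi>\<^sub>M i\<in>UNIV. arm_dist K D (fst (snd i))) (\<lambda>x. \<lambda>i\<in>UNIV. x i) =
       (\<Pi>\<^sub>M i\<in>UNIV. distr M (arm_dist K D (fst (snd i))) (\<lambda>x. x i))" .
  qed simp
  then show ?thesis
    by (simp add: Mp.indep_vars_def Q_sets Q_meas_eq)
qed

lemma coord_AE: "AE \<omega> in M. \<omega> idx \<in> {0..1}"
  unfolding sample_space_def
  by (rule AE_PiM_component[OF Q_prob]) (use Q_AE[of "fst (snd idx)"] in auto)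

end

lemma emp_var_pairs:
  fixes x :: "nat \<Rightarrow> real"
  assumes t: "t \<ge> 2"
  shows "emp_var x t = (\<Sum>a<t. \<Sum>b<t. (x a - x b)\<^sup>2) / (2 * real t * (real t - 1))"
proof -
  define S where "S = (\<Sum>j<t. x j)"
  define Q where "Q = (\<Sum>j<t. (x j)\<^sup>2)"
  have tpos: "real t > 0" "real t - 1 > 0" using t by auto
  have 1: "(\<Sum>a<t. \<Sum>b<t. (x a - x b)\<^sup>2) = 2 * real t * Q - 2 * S\<^sup>2"
  proof -
    have "(\<Sum>a<t. \<Sum>b<t. (x a - x b)\<^sup>2) = (\<Sum>a<t. \<Sum>b<t. (x a)\<^sup>2 + (x b)\<^sup>2 - 2 * x a * x b)"
      by (intro sum.cong refl) (simp add: power2_diff)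
    also have "\<dots> = (\<Sum>a<t. real t * (x a)\<^sup>2 + Q - 2 * x a * S)"
      by (intro sum.cong refl) (simp add: sum.distrib sum_subtractf Q_def S_def sum_distrib_left)
    also have "\<dots> = real t * Q + real t * Q - 2 * S * S"
      by (simp add: sum.distrib sum_subtractf Q_def S_def sum_distrib_left sum_distrib_right mult.assoc mult.commute mult.left_commute)
    finally show ?thesis by (simp add: power2_eq_square)
  qed
  have 2: "(\<Sum>j<t. (x j - S / real t)\<^sup>2) = Q - S\<^sup>2 / real t"
  proof -
    have "(\<Sum>j<t. (x j - S / real t)\<^sup>2) = (\<Sum>j<t. (x j)\<^sup>2 - 2 * (S / real t) * x j + (S / real t)\<^sup>2)"
      by (intro sum.cong refl) (simp add: power2_diff)
    also have "\<dots> = Q - 2 * (S / real t) * S + real t * (S / real t)\<^sup>2"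
      by (simp add: sum.distrib sum_subtractf Q_def S_def sum_distrib_left)
    also have "\<dots> = Q - S\<^sup>2 / real t"
      using tpos by (simp add: field_simps power2_eq_square)
    finally show ?thesis .
  qed
  show ?thesis
    using t tpos unfolding emp_var_def Let_def S_def[symmetric] 2 1
    by (simp add: field_simps power2_eq_square)
qed

lemma exists_perm2:
  assumes "a \<in> S" "b \<in> S" "a' \<in> S" "b' \<in> S" "a \<noteq> b" "a' \<noteq> b'"
  shows "\<exists>\<tau>. \<tau> permutes S \<and> \<tau> a = a' \<and> \<tau> b = b'"
proof -
  define \<tau>1 where "\<tau>1 = Transposition.transpose a a'"
  define c where "c = \<tau>1 b"
  define \<tau>2 where "\<tau>2 = Transposition.transpose c b'"
  have p1: "\<tau>1 permutes S" unfolding \<tau>1_def using assms by (intro permutes_swap_id) auto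
  have cS: "c \<in> S" unfolding c_def using p1 assms(2) by (simp add: permutes_in_image)
  have p2: "\<tau>2 permutes S" unfolding \<tau>2_def using assms cS by (intro permutes_swap_id) auto
  have ca: "c \<noteq> a'" unfolding c_def \<tau>1_def using assms by (auto simp: Transposition.transpose_def)
  have "\<tau>1 a = a'" unfolding \<tau>1_def by simp
  moreover have "\<tau>2 a' = a'" unfolding \<tau>2_def using ca assms(6) by (simp add: Transposition.transpose_def)
  moreover have "\<tau>2 c = b'" unfolding \<tau>2_def by simp
  ultimately have "(\<tau>2 \<circ> \<tau>1) a = a' \<and> (\<tau>2 \<circ> \<tau>1) b = b'" by (simp add: c_def)
  then show ?thesis using permutes_compose[OF p1 p2] by blast
qed

lemma perm_pair_sum:
  fixes h :: "'a \<Rightarrow> 'a \<Rightarrow> real"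
  assumes fin: "finite S" and pq: "p \<in> S" "q \<in> S" "p \<noteq> q"
  shows "real (card S) * (real (card S) - 1) * (\<Sum>\<pi>\<in>{\<pi>. \<pi> permutes S}. h (\<pi> p) (\<pi> q))
       = fact (card S) * (\<Sum>a\<in>S. \<Sum>b\<in>S-{a}. h a b)"
proof -
  define P where "P = {\<pi>. \<pi> permutes S}"
  define Pr where "Pr = Sigma S (\<lambda>a. S - {a})"
  define F where "F = (\<lambda>ab. {\<pi>. \<pi> \<in> P \<and> (\<pi> p, \<pi> q) = ab})"
  have finP: "finite P" using finite_permutations[OF fin] by (simp add: P_def)
  have finPr: "finite Pr" using fin by (simp add: Pr_def)
  have img: "(\<lambda>\<pi>. (\<pi> p, \<pi> q)) ` P \<subseteq> Pr"
  proof
    fix z assume "z \<in> (\<lambda>\<pi>. (\<pi> p, \<pi> q)) ` P"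
    then obtain \<pi> where pi: "\<pi> permutes S" "z = (\<pi> p, \<pi> q)" by (auto simp: P_def)
    have "\<pi> p \<in> S" "\<pi> q \<in> S" using pi(1) pq by (simp_all add: permutes_in_image)
    moreover have "\<pi> p \<noteq> \<pi> q" using permutes_inj[OF pi(1)] pq(3) by (auto dest: injD)
    ultimately show "z \<in> Pr" using pi(2) by (auto simp: Pr_def)
  qed
  have cardle: "card (F ab) \<le> card (F ab')" if ab: "ab \<in> Pr" and ab': "ab' \<in> Pr" for ab ab'
  proof -
    have "fst ab \<in> S" "snd ab \<in> S" "fst ab \<noteq> snd ab" "fst ab' \<in> S" "snd ab' \<in> S" "fst ab' \<noteq> snd ab'"
      using ab ab' by (auto simp: Pr_def)
    then obtain \<tau> where tau: "\<tau> permutes S" "\<tau> (fst ab) = fst ab'" "\<tau> (snd ab) = snd ab'"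
      using exists_perm2[of "fst ab" S "snd ab" "fst ab'" "snd ab'"] by blast
    have injt: "inj \<tau>" using permutes_inj[OF tau(1)] .
    show ?thesis
    proof (rule card_inj_on_le[of "\<lambda>\<pi>. \<tau> \<circ> \<pi>"])
      show "inj_on ((\<circ>) \<tau>) (F ab)"
        by (rule inj_onI) (metis fun.inj_map_strong injD injt)
      show "(\<circ>) \<tau> ` F ab \<subseteq> F ab'"
      proof
        fix z assume "z \<in> (\<circ>) \<tau> ` F ab"
        then obtain \<pi> where "\<pi> permutes S" "(\<pi> p, \<pi> q) = ab" "z = \<tau> \<circ> \<pi>" by (auto simp: F_def P_def)
        then show "z \<in> F ab'" using tau permutes_compose[of \<pi> S \<tau>]
          by (auto simp: F_def P_def prod_eq_iff)
      qed
      show "finite (F ab')" using finP by (simp add: F_def)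
    qed
  qed
  define N where "N = card (F (p, q))"
  have pqPr: "(p, q) \<in> Pr" using pq by (auto simp: Pr_def)
  have cardeq: "card (F ab) = N" if "ab \<in> Pr" for ab
    using cardle[OF that pqPr] cardle[OF pqPr that] unfolding N_def by simp
  have grp: "(\<Sum>ab\<in>Pr. sum f (F ab)) = sum f P" for f :: "('a \<Rightarrow> 'a) \<Rightarrow> real"
    unfolding F_def using sum.group[OF finP finPr img, of f] by simp
  have inner: "sum (\<lambda>\<pi>. h (\<pi> p) (\<pi> q)) (F ab) = real N * h (fst ab) (snd ab)" if "ab \<in> Pr" for ab
  proof -
    have "sum (\<lambda>\<pi>. h (\<pi> p) (\<pi> q)) (F ab) = sum (\<lambda>\<pi>. h (fst ab) (snd ab)) (F ab)"
      by (intro sum.cong refl) (auto simp: F_def)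
    then show ?thesis using cardeq[OF that] by simp
  qed
  have s1: "(\<Sum>\<pi>\<in>P. h (\<pi> p) (\<pi> q)) = real N * (\<Sum>ab\<in>Pr. h (fst ab) (snd ab))"
    using grp[of "\<lambda>\<pi>. h (\<pi> p) (\<pi> q)"] inner by (simp add: sum_distrib_left)
  have s2: "real (card P) = real N * real (card Pr)"
    using grp[of "\<lambda>_. 1"] cardeq by (simp add: mult.commute)
  have cP: "card P = fact (card S)" unfolding P_def by (rule card_permutations[OF refl fin])
  have cPr: "real (card Pr) = real (card S) * (real (card S) - 1)"
  proof -
    have "card Pr = (\<Sum>a\<in>S. card (S - {a}))" using fin by (simp add: Pr_def)
    also have "\<dots> = (\<Sum>a\<in>S. card S - 1)" by (intro sum.cong refl) (simp add: card_Diff_singleton fin)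
    finally have "card Pr = card S * (card S - 1)" by simp
    moreover have "card S \<ge> 1" using fin pq(1) by (metis card_0_eq empty_iff less_one not_less)
    ultimately show ?thesis by (simp add: of_nat_diff)
  qed
  have s3: "(\<Sum>ab\<in>Pr. h (fst ab) (snd ab)) = (\<Sum>a\<in>S. \<Sum>b\<in>S-{a}. h a b)"
    unfolding Pr_def using fin by (subst sum.Sigma) (auto simp: split_beta)
  have "real (card S) * (real (card S) - 1) * (\<Sum>\<pi>\<in>P. h (\<pi> p) (\<pi> q))
      = real (card Pr) * (real N * (\<Sum>ab\<in>Pr. h (fst ab) (snd ab)))" by (simp add: cPr s1)
  also have "\<dots> = real (card P) * (\<Sum>ab\<in>Pr. h (fst ab) (snd ab))" using s2 by simp
  also have "\<dots> = fact (card S) * (\<Sum>a\<in>S. \<Sum>b\<in>S-{a}. h a b)" using cP s3 by simp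
  finally show ?thesis unfolding P_def .
qed


lemma perm_W_sum:
  fixes h :: "nat \<Rightarrow> nat \<Rightarrow> real"
  assumes kt: "2 * k \<le> t"
  shows "real t * (real t - 1) * (\<Sum>\<pi>\<in>{\<pi>. \<pi> permutes {..<t}}. \<Sum>i<k. h (\<pi> (2*i)) (\<pi> (2*i+1)))
       = real k * fact t * (\<Sum>a<t. \<Sum>b\<in>{..<t}-{a}. h a b)"
proof -
  have "real t * (real t - 1) * (\<Sum>\<pi>\<in>{\<pi>. \<pi> permutes {..<t}}. \<Sum>i<k. h (\<pi> (2*i)) (\<pi> (2*i+1)))
      = (\<Sum>i<k. real t * (real t - 1) * (\<Sum>\<pi>\<in>{\<pi>. \<pi> permutes {..<t}}. h (\<pi> (2*i)) (\<pi> (2*i+1))))"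
    by (subst sum.swap) (simp add: sum_distrib_left)
  also have "\<dots> = (\<Sum>i<k. fact t * (\<Sum>a<t. \<Sum>b\<in>{..<t}-{a}. h a b))"
  proof (intro sum.cong refl)
    fix i assume "i \<in> {..<k}"
    then have "2*i \<in> {..<t}" "2*i+1 \<in> {..<t}" "2*i \<noteq> 2*i+1" using kt by auto
    from perm_pair_sum[OF _ this, of h] show "real t * (real t - 1) * (\<Sum>\<pi>\<in>{\<pi>. \<pi> permutes {..<t}}. h (\<pi> (2*i)) (\<pi> (2*i+1)))
        = fact t * (\<Sum>a<t. \<Sum>b\<in>{..<t}-{a}. h a b)" by simp
  qed
  also have "\<dots> = real k * fact t * (\<Sum>a<t. \<Sum>b\<in>{..<t}-{a}. h a b)" by simp
  finally show ?thesis .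
qed


context shvv begin

lemma D_meas: "i \<in> {1..K} \<Longrightarrow> f \<in> borel_measurable borel \<Longrightarrow> f \<in> borel_measurable (D i)"
proof -
  assume i: "i \<in> {1..K}" and f: "f \<in> borel_measurable borel"
  have e: "borel_measurable (D i) = borel_measurable borel" by (rule measurable_cong_sets[OF borel[OF i] refl])
  show ?thesis using f unfolding e .
qed

lemma Q_meas_src: "measurable (arm_dist K D i) N = measurable borel N"
  by (rule measurable_cong_sets[OF Q_sets refl])

lemma D_int_x: "i \<in> {1..K} \<Longrightarrow> integrable (D i) (\<lambda>x. x)"
proof -
  assume i: "i \<in> {1..K}"
  interpret Di: prob_space "D i" using prob[OF i] .
  show ?thesis
    by (rule Di.integrable_const_bound[where B=1]) (auto intro!: D_meas[OF i] eventually_mono[OF supp[OF i]])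
qed

lemma D_int_x2: "i \<in> {1..K} \<Longrightarrow> integrable (D i) (\<lambda>x. x\<^sup>2)"
proof -
  assume i: "i \<in> {1..K}"
  interpret Di: prob_space "D i" using prob[OF i] .
  show ?thesis
    by (rule Di.integrable_const_bound[where B=1]) (auto intro!: D_meas[OF i] eventually_mono[OF supp[OF i]] simp: abs_square_le_1)
qed

lemma arm_var_eq: "i \<in> {1..K} \<Longrightarrow> arm_var D i = (\<integral>x. x\<^sup>2 \<partial>D i) - (\<integral>x. x \<partial>D i)\<^sup>2"
proof -
  assume i: "i \<in> {1..K}"
  interpret Di: prob_space "D i" using prob[OF i] .
  define \<mu> where "\<mu> = (\<integral>x. x \<partial>D i)"
  have "arm_var D i = (\<integral>x. x\<^sup>2 - 2 * \<mu> * x + \<mu>\<^sup>2 \<partial>D i)"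
    unfolding arm_var_def \<mu>_def[symmetric] by (intro Bochner_Integration.integral_cong refl) (simp add: power2_diff)
  also have "\<dots> = (\<integral>x. x\<^sup>2 \<partial>D i) - 2 * \<mu> * \<mu> + \<mu>\<^sup>2"
    using D_int_x[OF i] D_int_x2[OF i] by (simp add: \<mu>_def Di.prob_space)
  finally show ?thesis by (simp add: \<mu>_def power2_eq_square)
qed

lemma distr_coord: "distr M (arm_dist K D (fst (snd idx))) (\<lambda>\<omega>. \<omega> idx) = arm_dist K D (fst (snd idx))"
  unfolding sample_space_def by (rule distr_PiM_component[OF Q_prob]) simp

lemma integral_coord:
  fixes f :: "real \<Rightarrow> real"
  assumes f: "f \<in> borel_measurable borel"
  shows "(\<integral>\<omega>. f (\<omega> idx) \<partial>M) = (\<integral>x. f x \<partial>arm_dist K D (fst (snd idx)))"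
proof -
  have m: "(\<lambda>\<omega>. \<omega> idx) \<in> measurable M (arm_dist K D (fst (snd idx)))"
    unfolding sample_space_def by (rule measurable_component_singleton) simp
  have f': "f \<in> borel_measurable (arm_dist K D (fst (snd idx)))"
    using f by (simp add: Q_meas_src)
  show ?thesis
    using integral_distr[OF m f'] distr_coord by simp
qed

lemma int_coord_bounded:
  fixes f :: "real \<Rightarrow> real" and B :: real
  assumes f: "f \<in> borel_measurable borel" and B: "\<And>x. x \<in> {0..1} \<Longrightarrow> \<bar>f x\<bar> \<le> B"
  shows "integrable M (\<lambda>\<omega>. f (\<omega> idx))"
  by (rule Mp.integrable_const_bound[where B=B]) (auto intro!: eventually_mono[OF coord_AE[of idx]] B measurable_compose[OF coord_meas f])

lemma indep_prod_coord:
  assumes "idx1 \<noteq> idx2"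
  shows "(\<integral>\<omega>. \<omega> idx1 * \<omega> idx2 \<partial>M) = (\<integral>\<omega>. \<omega> idx1 \<partial>M) * (\<integral>\<omega>. \<omega> idx2 \<partial>M)"
proof -
  have ind: "Mp.indep_vars (\<lambda>_. borel) (\<lambda>idx \<omega>. \<omega> idx) {idx1, idx2}"
    by (rule Mp.indep_vars_subset[OF coord_indep]) auto
  have "(\<integral>\<omega>. (\<Prod>i\<in>{idx1, idx2}. \<omega> i) \<partial>M) = (\<Prod>i\<in>{idx1, idx2}. \<integral>\<omega>. \<omega> i \<partial>M)"
    by (rule Mp.indep_vars_lebesgue_integral[OF _ ind])
       (auto intro: int_coord_bounded[where f="\<lambda>x. x" and B=1])
  then show ?thesis using assms by simp
qed

lemma sq_diff_expect:
  assumes "idx1 \<noteq> idx2" and "fst (snd idx1) = i" "fst (snd idx2) = i" and i: "i \<in> {1..K}"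
  shows "(\<integral>\<omega>. (\<omega> idx1 - \<omega> idx2)\<^sup>2 \<partial>M) = 2 * arm_var D i"
proof -
  have ad: "arm_dist K D i = D i" using i by (simp add: arm_dist_def)
  have e1: "(\<integral>\<omega>. \<omega> idx \<partial>M) = (\<integral>x. x \<partial>D i)" if "fst (snd idx) = i" for idx
    using integral_coord[of "\<lambda>x. x" idx] that ad by simp
  have e2: "(\<integral>\<omega>. (\<omega> idx)\<^sup>2 \<partial>M) = (\<integral>x. x\<^sup>2 \<partial>D i)" if "fst (snd idx) = i" for idx
    using integral_coord[of "\<lambda>x. x\<^sup>2" idx] that ad by simp
  have i1: "integrable M (\<lambda>\<omega>. \<omega> idx)" for idx
    by (rule int_coord_bounded[where f="\<lambda>x. x" and B=1]) auto
  have i2: "integrable M (\<lambda>\<omega>. (\<omega> idx)\<^sup>2)" for idx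
    by (rule int_coord_bounded[where f="\<lambda>x. x\<^sup>2" and B=1]) (auto simp: abs_square_le_1)
  have "AE \<omega> in M. norm (\<omega> idx1 * \<omega> idx2) \<le> (1::real)"
    using coord_AE[of idx1] coord_AE[of idx2] by eventually_elim (auto simp: abs_mult mult_le_one)
  then have i12: "integrable M (\<lambda>\<omega>. \<omega> idx1 * \<omega> idx2)"
    by (rule Mp.integrable_const_bound) simp
  have "(\<integral>\<omega>. (\<omega> idx1 - \<omega> idx2)\<^sup>2 \<partial>M) = (\<integral>\<omega>. (\<omega> idx1)\<^sup>2 + (\<omega> idx2)\<^sup>2 - 2 * (\<omega> idx1 * \<omega> idx2) \<partial>M)"
    by (intro Bochner_Integration.integral_cong refl) (simp add: power2_diff)
  also have "\<dots> = (\<integral>\<omega>. (\<omega> idx1)\<^sup>2 \<partial>M) + (\<integral>\<omega>. (\<omega> idx2)\<^sup>2 \<partial>M) - 2 * (\<integral>\<omega>. \<omega> idx1 * \<omega> idx2 \<partial>M)"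
    using i2 i12 by simp
  also have "\<dots> = 2 * ((\<integral>x. x\<^sup>2 \<partial>D i) - (\<integral>x. x \<partial>D i)\<^sup>2)"
    unfolding indep_prod_coord[OF assms(1)] using assms e1 e2 by (simp add: power2_eq_square)
  finally show ?thesis using arm_var_eq[OF i] by simp
qed

end

definition gpair :: "nat \<Rightarrow> nat \<Rightarrow> (nat \<times> nat \<times> nat \<Rightarrow> real) \<Rightarrow> nat \<Rightarrow> nat \<Rightarrow> real" where
  "gpair r j \<omega> a b = ((\<omega> (r,1,a) - \<omega> (r,1,b))\<^sup>2 - (\<omega> (r,j,a) - \<omega> (r,j,b))\<^sup>2) / 2"

definition Wpi :: "nat \<Rightarrow> nat \<Rightarrow> nat \<Rightarrow> (nat \<Rightarrow> nat) \<Rightarrow> (nat \<times> nat \<times> nat \<Rightarrow> real) \<Rightarrow> real" where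
  "Wpi r j k \<pi> \<omega> = (\<Sum>i<k. gpair r j \<omega> (\<pi> (2*i)) (\<pi> (2*i+1)))"

context shvv begin

lemma gpair_meas[measurable]: "(\<lambda>\<omega>. gpair r j \<omega> a b) \<in> borel_measurable M"
  unfolding gpair_def by measurable

lemma sqdiff_AE: "AE \<omega> in M. (\<omega> i1 - \<omega> i2)\<^sup>2 \<in> {0..1}"
  using coord_AE[of i1] coord_AE[of i2] by eventually_elim (auto simp: abs_square_le_1 abs_le_iff)

lemma int_sqdiff: "integrable M (\<lambda>\<omega>. (\<omega> i1 - \<omega> i2)\<^sup>2)"
proof -
  have "AE \<omega> in M. norm ((\<omega> i1 - \<omega> i2)\<^sup>2) \<le> (1::real)"
    using sqdiff_AE[of i1 i2] by eventually_elim auto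
  then show ?thesis by (rule Mp.integrable_const_bound) simp
qed

lemma half_diff_bound: "(x::real) \<in> {0..1} \<Longrightarrow> y \<in> {0..1} \<Longrightarrow> (x - y) / 2 \<in> {-1/2..1/2}"
  by auto

lemma gpair_AE: "AE \<omega> in M. gpair r j \<omega> a b \<in> {-1/2..1/2}"
  using sqdiff_AE[of "(r,1,a)" "(r,1,b)"] sqdiff_AE[of "(r,j,a)" "(r,j,b)"]
  by eventually_elim (unfold gpair_def, rule half_diff_bound)

lemma gpair_expect:
  assumes ab: "a \<noteq> b" and j: "j \<in> {1..K}"
  shows "(\<integral>\<omega>. gpair r j \<omega> a b \<partial>M) = arm_var D 1 - arm_var D j"
proof -
  have "(\<integral>\<omega>. gpair r j \<omega> a b \<partial>M) =
     ((\<integral>\<omega>. (\<omega> (r,1,a) - \<omega> (r,1,b))\<^sup>2 \<partial>M) - (\<integral>\<omega>. (\<omega> (r,j,a) - \<omega> (r,j,b))\<^sup>2 \<partial>M)) / 2"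
    unfolding gpair_def using int_sqdiff by simp
  also have "\<dots> = arm_var D 1 - arm_var D j"
    using sq_diff_expect[of "(r,1,a)" "(r,1,b)" 1] sq_diff_expect[of "(r,j,a)" "(r,j,b)" j] ab j K2
    by simp
  finally show ?thesis .
qed

lemma mgf_one:
  assumes s: "s > 0" and ab: "a \<noteq> b" and j: "j \<in> {1..K}"
  shows "(\<integral>\<^sup>+\<omega>. ennreal (exp (- s * gpair r j \<omega> a b)) \<partial>M)
          \<le> ennreal (exp (- s * (arm_var D 1 - arm_var D j) + s\<^sup>2 / 8))"
proof -
  define \<delta> where "\<delta> = arm_var D 1 - arm_var D j"
  interpret G: interval_bounded_random_variable M "\<lambda>\<omega>. - gpair r j \<omega> a b" "-1/2" "1/2"
    by unfold_locales (auto intro: eventually_mono[OF gpair_AE[of r j a b]])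
  have E: "(\<integral>\<omega>. - gpair r j \<omega> a b \<partial>M) = - \<delta>"
    using gpair_expect[OF ab j] by (simp add: \<delta>_def)
  have H: "(\<integral>\<^sup>+\<omega>. ennreal (exp (s * (- gpair r j \<omega> a b - (- \<delta>)))) \<partial>M) \<le> ennreal (exp (s\<^sup>2 * (1/2 - (-1/2))\<^sup>2 / 8))"
    using G.Hoeffdings_lemma_nn_integral[OF s] unfolding E .
  have "(\<integral>\<^sup>+\<omega>. ennreal (exp (- s * gpair r j \<omega> a b)) \<partial>M)
      = (\<integral>\<^sup>+\<omega>. ennreal (exp (- s * \<delta>)) * ennreal (exp (s * (- gpair r j \<omega> a b - (- \<delta>)))) \<partial>M)"
    by (intro nn_integral_cong) (simp add: ennreal_mult[symmetric] mult_exp_exp algebra_simps)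
  also have "\<dots> = ennreal (exp (- s * \<delta>)) * (\<integral>\<^sup>+\<omega>. ennreal (exp (s * (- gpair r j \<omega> a b - (- \<delta>)))) \<partial>M)"
    by (rule nn_integral_cmult) measurable
  also have "\<dots> \<le> ennreal (exp (- s * \<delta>)) * ennreal (exp (s\<^sup>2 * (1/2 - (-1/2))\<^sup>2 / 8))"
    by (rule mult_left_mono[OF H]) simp
  also have "\<dots> = ennreal (exp (- s * \<delta> + s\<^sup>2 / 8))"
    by (simp add: ennreal_mult[symmetric] mult_exp_exp)
  finally show ?thesis by (simp add: \<delta>_def)
qed

lemma indep_g:
  assumes pi: "\<pi> permutes {..<t}" and kt: "2*k \<le> t"
  shows "Mp.indep_vars (\<lambda>_. borel) (\<lambda>i \<omega>. gpair r j \<omega> (\<pi> (2*i)) (\<pi> (2*i+1))) {..<k}"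
proof -
  define S where "S = (\<lambda>i. {(r,1,\<pi> (2*i)), (r,1,\<pi> (2*i+1)), (r,j,\<pi> (2*i)), (r,j,\<pi> (2*i+1))})"
  have inj: "\<pi> x = \<pi> y \<Longrightarrow> x = y" for x y using permutes_inj[OF pi] by (auto dest: injD)
  have disj: "disjoint_family_on S {..<k}"
  unfolding disjoint_family_on_def
  proof (intro ballI impI)
    fix i i' :: nat assume "i \<in> {..<k}" "i' \<in> {..<k}" "i \<noteq> i'"
    have a1: "\<pi> (2*i) \<noteq> \<pi> (2*i')" using inj \<open>i \<noteq> i'\<close> by fastforce
    have a2: "\<pi> (2*i) \<noteq> \<pi> (2*i'+1)" using inj[of "2*i" "2*i'+1"] by presburger
    have a3: "\<pi> (2*i+1) \<noteq> \<pi> (2*i')" using inj[of "2*i+1" "2*i'"] by presburger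
    have a4: "\<pi> (2*i+1) \<noteq> \<pi> (2*i'+1)" using inj \<open>i \<noteq> i'\<close> by fastforce
    show "S i \<inter> S i' = {}" unfolding S_def using a1 a2 a3 a4 by auto
  qed
  have ind1: "Mp.indep_vars (\<lambda>i. PiM (S i) (\<lambda>_. borel)) (\<lambda>i \<omega>. restrict (\<lambda>idx. \<omega> idx) (S i)) {..<k}"
    by (rule Mp.indep_vars_restrict[OF coord_indep _ disj]) auto
  define Y where "Y = (\<lambda>i (f :: nat\<times>nat\<times>nat \<Rightarrow> real). ((f (r,1,\<pi> (2*i)) - f (r,1,\<pi> (2*i+1)))\<^sup>2 - (f (r,j,\<pi> (2*i)) - f (r,j,\<pi> (2*i+1)))\<^sup>2) / 2)"
  have Ym: "Y i \<in> borel_measurable (PiM (S i) (\<lambda>_. borel))" for i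
  proof -
    have c: "(\<lambda>f. f x) \<in> borel_measurable (PiM (S i) (\<lambda>_. borel))" if "x \<in> S i" for x
      using measurable_component_singleton[OF that, of "\<lambda>_. borel"] .
    have "(r,1,\<pi> (2*i)) \<in> S i" "(r,1,\<pi> (2*i+1)) \<in> S i" "(r,j,\<pi> (2*i)) \<in> S i" "(r,j,\<pi> (2*i+1)) \<in> S i"
      by (auto simp: S_def)
    note cs = c[OF this(1)] c[OF this(2)] c[OF this(3)] c[OF this(4)]
    show ?thesis unfolding Y_def using cs by measurable
  qed
  have "Mp.indep_vars (\<lambda>_. borel) (\<lambda>i \<omega>. Y i (restrict (\<lambda>idx. \<omega> idx) (S i))) {..<k}"
    by (rule Mp.indep_vars_compose2[OF ind1 Ym])
  moreover have "Y i (restrict (\<lambda>idx. \<omega> idx) (S i)) = gpair r j \<omega> (\<pi> (2*i)) (\<pi> (2*i+1))" for i \<omega>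
    by (simp add: Y_def S_def gpair_def)
  ultimately show ?thesis by simp
qed

lemma mgf_W:
  assumes s: "s > 0" and pi: "\<pi> permutes {..<t}" and kt: "2*k \<le> t" and j: "j \<in> {1..K}"
  shows "(\<integral>\<^sup>+\<omega>. ennreal (exp (- s * Wpi r j k \<pi> \<omega>)) \<partial>M)
           \<le> ennreal (exp (real k * (- s * (arm_var D 1 - arm_var D j) + s\<^sup>2 / 8)))"
proof -
  define c where "c = - s * (arm_var D 1 - arm_var D j) + s\<^sup>2 / 8"
  have inj: "\<pi> x = \<pi> y \<Longrightarrow> x = y" for x y using permutes_inj[OF pi] by (auto dest: injD)
  have "(\<integral>\<^sup>+\<omega>. ennreal (exp (- s * Wpi r j k \<pi> \<omega>)) \<partial>M)
      = (\<integral>\<^sup>+\<omega>. (\<Prod>i<k. ennreal (exp (- s * gpair r j \<omega> (\<pi> (2*i)) (\<pi> (2*i+1))))) \<partial>M)"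
    by (intro nn_integral_cong) (simp add: Wpi_def sum_distrib_left exp_sum prod_ennreal)
  also have "\<dots> = (\<Prod>i<k. \<integral>\<^sup>+\<omega>. ennreal (exp (- s * gpair r j \<omega> (\<pi> (2*i)) (\<pi> (2*i+1)))) \<partial>M)"
  proof (rule Mp.indep_vars_nn_integral)
    show "Mp.indep_vars (\<lambda>_. borel) (\<lambda>i \<omega>. ennreal (exp (- s * gpair r j \<omega> (\<pi> (2*i)) (\<pi> (2*i+1))))) {..<k}"
      by (rule Mp.indep_vars_compose2[OF indep_g[OF pi kt], where Y="\<lambda>_ y. ennreal (exp (- s * y))"]) measurable
  qed auto
  also have "\<dots> \<le> (\<Prod>i<k. ennreal (exp c))"
  proof (rule prod_mono_ennreal)
    fix i assume "i \<in> {..<k}"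
    have "\<pi> (2*i) \<noteq> \<pi> (2*i+1)" using inj[of "2*i" "2*i+1"] by presburger
    then show "(\<integral>\<^sup>+\<omega>. ennreal (exp (- s * gpair r j \<omega> (\<pi> (2*i)) (\<pi> (2*i+1)))) \<partial>M) \<le> ennreal (exp c)"
      unfolding c_def by (rule mgf_one[OF s _ j])
  qed
  also have "\<dots> = ennreal (exp (real k * c))"
    by (simp add: ennreal_power exp_of_nat_mult)
  finally show ?thesis unfolding c_def .
qed

end

context shvv begin

lemma emp_var_meas[measurable]: "(\<lambda>\<omega>. emp_var (\<lambda>a. \<omega> (r,i,a)) t) \<in> borel_measurable M"
  unfolding emp_var_def Let_def by measurable

lemma Wpi_meas[measurable]: "(\<lambda>\<omega>. Wpi r j k \<pi> \<omega>) \<in> borel_measurable M"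
  unfolding Wpi_def by measurable

lemma Dv_identity:
  assumes t: "t \<ge> 2" and kt: "2 * k \<le> t"
  shows "real k * (emp_var (\<lambda>a. \<omega> (r,1,a)) t - emp_var (\<lambda>a. \<omega> (r,j,a)) t)
     = (\<Sum>\<pi>\<in>{\<pi>. \<pi> permutes {..<t}}. Wpi r j k \<pi> \<omega>) / fact t"
proof -
  define G where "G = (\<Sum>a<t. \<Sum>b\<in>{..<t}-{a}. gpair r j \<omega> a b)"
  have tt: "real t * (real t - 1) > 0" using t by auto
  have g0: "gpair r j \<omega> a a = 0" for a by (simp add: gpair_def)
  have "(\<Sum>a<t. \<Sum>b<t. (\<omega> (r,1,a) - \<omega> (r,1,b))\<^sup>2) - (\<Sum>a<t. \<Sum>b<t. (\<omega> (r,j,a) - \<omega> (r,j,b))\<^sup>2)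
        = (\<Sum>a<t. \<Sum>b<t. (\<omega> (r,1,a) - \<omega> (r,1,b))\<^sup>2 - (\<omega> (r,j,a) - \<omega> (r,j,b))\<^sup>2)"
    by (simp add: sum_subtractf)
  also have "\<dots> = (\<Sum>a<t. \<Sum>b<t. 2 * gpair r j \<omega> a b)"
    by (intro sum.cong refl) (simp add: gpair_def)
  also have "\<dots> = 2 * (\<Sum>a<t. \<Sum>b<t. gpair r j \<omega> a b)"
    by (simp add: sum_distrib_left)
  also have "(\<Sum>a<t. \<Sum>b<t. gpair r j \<omega> a b) = G"
    unfolding G_def
  proof (rule sum.cong[OF refl])
    fix a assume "a \<in> {..<t}"
    then show "(\<Sum>b<t. gpair r j \<omega> a b) = (\<Sum>b\<in>{..<t}-{a}. gpair r j \<omega> a b)"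
      using sum.remove[of "{..<t}" a "gpair r j \<omega> a"] g0 by simp
  qed
  finally have AB: "(\<Sum>a<t. \<Sum>b<t. (\<omega> (r,1,a) - \<omega> (r,1,b))\<^sup>2) - (\<Sum>a<t. \<Sum>b<t. (\<omega> (r,j,a) - \<omega> (r,j,b))\<^sup>2) = 2 * G" .
  have diff: "emp_var (\<lambda>a. \<omega> (r,1,a)) t - emp_var (\<lambda>a. \<omega> (r,j,a)) t = G / (real t * (real t - 1))"
  proof -
    have "emp_var (\<lambda>a. \<omega> (r,1,a)) t - emp_var (\<lambda>a. \<omega> (r,j,a)) t
       = ((\<Sum>a<t. \<Sum>b<t. (\<omega> (r,1,a) - \<omega> (r,1,b))\<^sup>2) - (\<Sum>a<t. \<Sum>b<t. (\<omega> (r,j,a) - \<omega> (r,j,b))\<^sup>2)) / (2 * real t * (real t - 1))"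
      unfolding emp_var_pairs[OF t] by (simp add: diff_divide_distrib)
    also have "\<dots> = G / (real t * (real t - 1))" unfolding AB by (simp add: mult.assoc)
    finally show ?thesis .
  qed
  define SW where "SW = (\<Sum>\<pi>\<in>{\<pi>. \<pi> permutes {..<t}}. Wpi r j k \<pi> \<omega>)"
  define T where "T = real t * (real t - 1)"
  have Tpos: "T > 0" using tt by (simp add: T_def)
  have W: "T * SW = real k * fact t * G"
    unfolding Wpi_def G_def SW_def T_def by (rule perm_W_sum[OF kt])
  have "SW = (T * SW) / T" using Tpos by simp
  also have "\<dots> = real k * fact t * G / T" unfolding W ..
  finally have "SW / fact t = real k * G / T" by simp
  then show ?thesis unfolding diff SW_def[symmetric] T_def[symmetric] by simp
qed

lemma conc:
  assumes j: "j \<in> {1..K}" and dpos: "arm_var D j \<le> arm_var D 1"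
  shows "Mp.prob {\<omega> \<in> space M. emp_var (\<lambda>a. \<omega> (r,1,a)) t \<le> emp_var (\<lambda>a. \<omega> (r,j,a)) t}
           \<le> exp (- 2 * real (t div 2) * (arm_var D 1 - arm_var D j)\<^sup>2)"
proof (cases "t \<ge> 2 \<and> arm_var D j < arm_var D 1")
  case False
  then have "real (t div 2) = 0 \<or> arm_var D 1 - arm_var D j = 0" using dpos by auto
  then show ?thesis using Mp.prob_le_1 by auto
next
  case True
  then have t: "t \<ge> 2" and dlt: "arm_var D j < arm_var D 1" by auto
  define k where "k = t div 2"
  define \<delta> where "\<delta> = arm_var D 1 - arm_var D j"
  define s where "s = 4 * \<delta>"
  define P where "P = {\<pi>. \<pi> permutes ({..<t}::nat set)}"
  define N where "N = card P"
  have kt: "2 * k \<le> t" and kpos: "k > 0" using t by (auto simp: k_def)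
  have dpos': "\<delta> > 0" and spos: "s > 0" using dlt by (auto simp: \<delta>_def s_def)
  have finP: "finite P" unfolding P_def by (rule finite_permutations) simp
  have NP: "real N = fact t" unfolding N_def P_def using card_permutations[of "{..<t}" t] by simp
  have Npos: "real N > 0" using NP by simp
  have Pne: "P \<noteq> {}" using Npos N_def by auto
  define Dv where "Dv = (\<lambda>\<omega>. emp_var (\<lambda>a. \<omega> (r,1,a)) t - emp_var (\<lambda>a. \<omega> (r,j,a)) t)"
  have Dvm[measurable]: "Dv \<in> borel_measurable M" unfolding Dv_def by measurable
  have kD: "real k * Dv \<omega> = (\<Sum>\<pi>\<in>P. (1 / real N) * Wpi r j k \<pi> \<omega>)" for \<omega>
  proof -
    have "(\<Sum>\<pi>\<in>P. (1 / real N) * Wpi r j k \<pi> \<omega>) = (\<Sum>\<pi>\<in>P. Wpi r j k \<pi> \<omega>) / fact t"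
      by (simp add: NP sum_divide_distrib)
    then show ?thesis unfolding Dv_def Dv_identity[OF t kt] P_def by simp
  qed
  have set_eq: "{\<omega> \<in> space M. emp_var (\<lambda>a. \<omega> (r,1,a)) t \<le> emp_var (\<lambda>a. \<omega> (r,j,a)) t}
      = {\<omega> \<in> space M. real k * Dv \<omega> \<le> 0}"
    using kpos by (auto simp: Dv_def mult_le_0_iff)
  have cvx: "exp (- s * (real k * Dv \<omega>)) \<le> (\<Sum>\<pi>\<in>P. (1 / real N) * exp (- s * Wpi r j k \<pi> \<omega>))" for \<omega>
  proof -
    have "exp (\<Sum>\<pi>\<in>P. (1 / real N) *\<^sub>R (- s * Wpi r j k \<pi> \<omega>)) \<le> (\<Sum>\<pi>\<in>P. (1 / real N) * exp (- s * Wpi r j k \<pi> \<omega>))"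
      using finP Pne Npos by (intro convex_on_sum[OF finP Pne exp_convex]) (auto simp: N_def)
    moreover have "(\<Sum>\<pi>\<in>P. (1 / real N) *\<^sub>R (- s * Wpi r j k \<pi> \<omega>)) = - s * (real k * Dv \<omega>)"
      unfolding kD by (simp add: sum_distrib_left algebra_simps)
    ultimately show ?thesis by simp
  qed
  have "emeasure M {\<omega> \<in> space M. real k * Dv \<omega> \<le> 0}
      \<le> ennreal (exp (s * 0)) * (\<integral>\<^sup>+\<omega>. ennreal (exp (- s * (real k * Dv \<omega>))) * indicator (space M) \<omega> \<partial>M)"
    by (rule Chernoff_ineq_nn_integral_le[OF spos]) auto
  also have "\<dots> \<le> (\<integral>\<^sup>+\<omega>. (\<Sum>\<pi>\<in>P. ennreal (1 / real N) * ennreal (exp (- s * Wpi r j k \<pi> \<omega>))) \<partial>M)"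
  proof -
    have "ennreal (exp (- s * (real k * Dv \<omega>))) * indicator (space M) \<omega>
        \<le> (\<Sum>\<pi>\<in>P. ennreal (1 / real N) * ennreal (exp (- s * Wpi r j k \<pi> \<omega>)))" for \<omega>
    proof -
      have "ennreal (exp (- s * (real k * Dv \<omega>))) * indicator (space M) \<omega> \<le> ennreal (exp (- s * (real k * Dv \<omega>)))"
        by (simp add: indicator_def)
      also have "\<dots> \<le> ennreal (\<Sum>\<pi>\<in>P. (1 / real N) * exp (- s * Wpi r j k \<pi> \<omega>))"
        using cvx[of \<omega>] by (rule ennreal_leI)
      also have "\<dots> = (\<Sum>\<pi>\<in>P. ennreal ((1 / real N) * exp (- s * Wpi r j k \<pi> \<omega>)))"
        by (rule sum_ennreal[symmetric]) (simp add: Npos less_imp_le)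
      also have "\<dots> = (\<Sum>\<pi>\<in>P. ennreal (1 / real N) * ennreal (exp (- s * Wpi r j k \<pi> \<omega>)))"
        by (rule sum.cong[OF refl], rule ennreal_mult) (simp_all add: Npos less_imp_le)
      finally show ?thesis .
    qed
    then have "(\<integral>\<^sup>+\<omega>. ennreal (exp (- s * (real k * Dv \<omega>))) * indicator (space M) \<omega> \<partial>M)
       \<le> (\<integral>\<^sup>+\<omega>. (\<Sum>\<pi>\<in>P. ennreal (1 / real N) * ennreal (exp (- s * Wpi r j k \<pi> \<omega>))) \<partial>M)"
      by (intro nn_integral_mono)
    then show ?thesis by (simp only: mult_zero_right exp_zero ennreal_1 mult_1)
  qed
  also have "\<dots> = (\<Sum>\<pi>\<in>P. ennreal (1 / real N) * (\<integral>\<^sup>+\<omega>. ennreal (exp (- s * Wpi r j k \<pi> \<omega>)) \<partial>M))"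
    by (subst nn_integral_sum) (auto intro!: sum.cong nn_integral_cmult)
  also have "\<dots> \<le> (\<Sum>\<pi>\<in>P. ennreal (1 / real N) * ennreal (exp (real k * (- s * \<delta> + s\<^sup>2 / 8))))"
  proof (intro sum_mono mult_left_mono)
    fix \<pi> assume "\<pi> \<in> P"
    then show "(\<integral>\<^sup>+\<omega>. ennreal (exp (- s * Wpi r j k \<pi> \<omega>)) \<partial>M) \<le> ennreal (exp (real k * (- s * \<delta> + s\<^sup>2 / 8)))"
      unfolding \<delta>_def P_def by (intro mgf_W[OF spos _ kt j]) simp
  qed simp
  also have "\<dots> = ennreal (exp (real k * (- s * \<delta> + s\<^sup>2 / 8)))"
    using Npos by (simp add: N_def ennreal_mult[symmetric] ennreal_of_nat_eq_real_of_nat)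
  also have "real k * (- s * \<delta> + s\<^sup>2 / 8) = - 2 * real k * \<delta>\<^sup>2"
    by (simp add: s_def power2_eq_square algebra_simps)
  finally have "emeasure M {\<omega> \<in> space M. real k * Dv \<omega> \<le> 0} \<le> ennreal (exp (- 2 * real k * \<delta>\<^sup>2))" .
  then show ?thesis
    unfolding set_eq k_def[symmetric] \<delta>_def[symmetric] Mp.emeasure_eq_measure
    by (subst (asm) ennreal_le_iff) auto
qed

end

lemma rank_card:
  fixes R :: "'a \<Rightarrow> 'a \<Rightarrow> bool"
  assumes fin: "finite A"
    and irr: "\<And>i. i \<in> A \<Longrightarrow> \<not> R i i"
    and trans: "\<And>i j l. i \<in> A \<Longrightarrow> j \<in> A \<Longrightarrow> l \<in> A \<Longrightarrow> R i j \<Longrightarrow> R j l \<Longrightarrow> R i l"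
    and total: "\<And>i j. i \<in> A \<Longrightarrow> j \<in> A \<Longrightarrow> i \<noteq> j \<Longrightarrow> R i j \<or> R j i"
  shows "card {i \<in> A. card {j \<in> A. R i j} < c} = min c (card A)"
proof -
  define rk where "rk i = card {j \<in> A. R i j}" for i
  have lt: "rk i < card A" if "i \<in> A" for i
  proof -
    have "{j \<in> A. R i j} \<subset> A" using that irr by auto
    then show ?thesis unfolding rk_def by (rule psubset_card_mono[OF fin])
  qed
  have less: "rk i' < rk i" if "i \<in> A" "i' \<in> A" "R i i'" for i i'
  proof -
    have "{j \<in> A. R i' j} \<subset> {j \<in> A. R i j}"
      using that trans irr by blast
    then show ?thesis unfolding rk_def by (rule psubset_card_mono[rotated]) (use fin in auto)
  qed
  have inj: "inj_on rk A"
  proof (rule inj_onI)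
    fix i i' assume "i \<in> A" "i' \<in> A" "rk i = rk i'"
    then show "i = i'" using less total by (metis less_irrefl)
  qed
  have img: "rk ` A = {..<card A}"
  proof (rule card_subset_eq)
    show "rk ` A \<subseteq> {..<card A}" using lt by auto
    show "card (rk ` A) = card {..<card A}" using card_image[OF inj] by simp
  qed simp
  have "card {i \<in> A. rk i < c} = card (rk ` {i \<in> A. rk i < c})"
    by (rule card_image[symmetric]) (rule inj_on_subset[OF inj], auto)
  also have "rk ` {i \<in> A. rk i < c} = {..<card A} \<inter> {..<c}"
    using img by auto
  also have "{..<card A} \<inter> {..<c} = {..<min c (card A)}"
    by auto
  also have "card {..<min c (card A)} = min c (card A)"
    by simp
  finally show ?thesis unfolding rk_def .
qed

lemma halve_subset: "halve A v \<subseteq> A"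
  unfolding halve_def by auto

lemma halve_trans:
  fixes v :: "nat \<Rightarrow> real"
  shows "(v i < v j \<or> (v j = v i \<and> i < j)) \<Longrightarrow> (v j < v l \<or> (v l = v j \<and> j < l)) \<Longrightarrow> (v i < v l \<or> (v l = v i \<and> i < l))"
  by auto

lemma halve_total:
  fixes v :: "nat \<Rightarrow> real"
  shows "i \<noteq> j \<Longrightarrow> (v i < v j \<or> (v j = v i \<and> i < j)) \<or> (v j < v i \<or> (v i = v j \<and> j < i))"
  by (cases "v i = v j") (auto simp: neq_iff)

lemma card_halve:
  assumes fin: "finite A"
  shows "card (halve A v) = (card A + 1) div 2"
proof -
  have "card (halve A v) = min ((card A + 1) div 2) (card A)"
    unfolding halve_def
    by (rule rank_card[OF fin]) (simp, erule (1) halve_trans, erule halve_total)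
  then show ?thesis by simp
qed

lemma halve_elim:
  assumes "1 \<in> A" "A \<subseteq> {1..K}" "1 \<notin> halve A v"
  shows "(card A + 1) div 2 \<le> card {j \<in> A - {1}. v 1 \<le> v j}"
proof -
  have "{j \<in> A. v 1 < v j \<or> (v j = v 1 \<and> 1 < j)} = {j \<in> A - {1}. v 1 \<le> v j}"
    using assms(2) by force
  then show ?thesis using assms(1,3) unfolding halve_def by auto
qed

primrec msz :: "nat \<Rightarrow> nat \<Rightarrow> nat" where
  "msz K 0 = K"
| "msz K (Suc r) = (msz K r + 1) div 2"

lemma shvv_sub: "shvv_set K n \<omega> r \<subseteq> {1..K}"
  by (induction r) (auto simp: Let_def dest: halve_subset[THEN subsetD])

lemma shvv_card: "card (shvv_set K n \<omega> r) = msz K r"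
proof (induction r)
  case (Suc r)
  have "finite (shvv_set K n \<omega> r)" using shvv_sub[of K n \<omega> r] finite_subset by blast
  then show ?case using Suc by (simp add: Let_def card_halve)
qed simp

lemma shvv_local:
  assumes "\<And>idx. fst idx < r \<Longrightarrow> \<omega> idx = \<omega>' idx"
  shows "shvv_set K n \<omega> r = shvv_set K n \<omega>' r"
  using assms
proof (induction r)
  case (Suc r)
  then have IH: "shvv_set K n \<omega> r = shvv_set K n \<omega>' r" by simp
  have "(\<lambda>i. emp_var (\<lambda>j. \<omega> (r, i, j)) t) = (\<lambda>i. emp_var (\<lambda>j. \<omega>' (r, i, j)) t)" for t
    using Suc.prems by simp
  then show ?case by (simp add: Let_def IH)
qed simp

definition Aprime :: "nat set \<Rightarrow> nat \<Rightarrow> nat set" where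
  "Aprime A q = (if 1 \<in> A then {j \<in> A - {1}. q \<le> card {i \<in> A - {1}. i < j}} else {})"

lemma Aprime_sub: "Aprime A q \<subseteq> A - {1}"
  unfolding Aprime_def by auto

lemma Aprime_ge:
  assumes "A \<subseteq> {1..K}" "j \<in> Aprime A q"
  shows "q + 2 \<le> j"
proof -
  have j: "j \<in> A" "j \<noteq> 1" "q \<le> card {i \<in> A - {1}. i < j}" using assms(2) by (auto simp: Aprime_def split: if_splits)
  have "{i \<in> A - {1}. i < j} \<subseteq> {2..<j}" using assms(1) by auto
  then have "card {i \<in> A - {1}. i < j} \<le> j - 2" using card_mono[of "{2..<j}"] by fastforce
  moreover have "j \<ge> 2" using j assms(1) by auto
  ultimately show ?thesis using j(3) by linarith
qed

lemma Aprime_compl: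
  assumes "finite A" "1 \<in> A"
  shows "card (A - {1} - Aprime A q) = min q (card A - 1)"
proof -
  have fin: "finite (A - {1})" using assms by simp
  have rk: "card {j \<in> A - {1}. card {i \<in> A - {1}. i < j} < q} = min q (card (A - {1}))"
    by (rule rank_card[OF fin]) auto
  have "A - {1} - Aprime A q = {j \<in> A - {1}. card {i \<in> A - {1}. i < j} < q}"
    using assms(2) by (auto simp: Aprime_def)
  then show ?thesis using rk assms by simp
qed

lemma Aprime_card_le:
  assumes "finite A" "q \<le> card A - 1"
  shows "card (Aprime A q) \<le> card A - 1 - q"
proof (cases "1 \<in> A")
  case True
  have le: "card (Aprime A q) \<le> card (A - {1})"
    using Aprime_sub[of A q] assms(1) by (intro card_mono) auto
  have "card (Aprime A q) = card (A - {1}) - card (A - {1} - Aprime A q)"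
    using card_Diff_subset[of "Aprime A q" "A - {1}"] Aprime_sub[of A q] assms(1) le
    by (simp add: finite_subset diff_diff_cancel)
  also have "\<dots> = card A - 1 - q" using Aprime_compl[OF assms(1) True, of q] assms True by simp
  finally show ?thesis by simp
qed (simp add: Aprime_def)

lemma W_Aprime:
  assumes "finite A" "1 \<in> A" "W \<subseteq> A - {1}"
  shows "card W \<le> card (W \<inter> Aprime A q) + q"
proof -
  have fW: "finite W" using assms finite_subset by blast
  have "W = (W \<inter> Aprime A q) \<union> (W - Aprime A q)" by auto
  then have "card W \<le> card (W \<inter> Aprime A q) + card (W - Aprime A q)"
    by (metis card_Un_le)
  also have "card (W - Aprime A q) \<le> card (A - {1} - Aprime A q)"
    by (rule card_mono) (use assms in auto)
  also have "\<dots> \<le> q" using Aprime_compl[OF assms(1,2), of q] by simp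
  finally show ?thesis by simp
qed


lemma halve_alt:
  assumes "finite S"
  shows "halve S v = {i\<in>S. (\<Sum>j\<in>S. if v i < v j \<or> (v j = v i \<and> i < j) then 1 else 0 :: real) < real ((card S + 1) div 2)}"
proof -
  have e: "real (card {j \<in> S. v i < v j \<or> (v j = v i \<and> i < j)}) = (\<Sum>j\<in>S. if v i < v j \<or> (v j = v i \<and> i < j) then 1 else 0 :: real)" for i
    using sum.inter_filter[OF assms, of "\<lambda>_. 1::real" "\<lambda>j. v i < v j \<or> (v j = v i \<and> i < j)"] by simp
  have eqi: "(card {j \<in> S. v i < v j \<or> (v j = v i \<and> i < j)} < (card S + 1) div 2) =
      ((\<Sum>j\<in>S. if v i < v j \<or> (v j = v i \<and> i < j) then 1 else 0 :: real) < real ((card S + 1) div 2))" for i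
    unfolding e[symmetric] of_nat_less_iff ..
  show ?thesis unfolding halve_def by (simp only: eqi)
qed

lemma halve_eq_sets:
  fixes v :: "'a \<Rightarrow> nat \<Rightarrow> real"
  assumes fin: "finite S" and vm[measurable]: "\<And>i. (\<lambda>\<omega>. v \<omega> i) \<in> borel_measurable N"
  shows "{\<omega>\<in>space N. halve S (v \<omega>) = S'} \<in> sets N"
proof -
  have eq: "{\<omega>\<in>space N. halve S (v \<omega>) = S'} = {\<omega>\<in>space N. S' \<subseteq> S \<and> (\<forall>i\<in>S. (i \<in> S') = ((\<Sum>j\<in>S. if v \<omega> i < v \<omega> j \<or> (v \<omega> j = v \<omega> i \<and> i < j) then 1 else 0 :: real) < real ((card S + 1) div 2)))}"
    unfolding halve_alt[OF fin] by blast
  show ?thesis unfolding eq using fin by measurable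
qed

lemma shvv_eq_sets:
  assumes cm: "\<And>idx. fst idx < r \<Longrightarrow> (\<lambda>\<omega>. \<omega> idx) \<in> borel_measurable N"
  shows "{\<omega>\<in>space N. shvv_set K n \<omega> r = S} \<in> sets N"
  using cm
proof (induction r arbitrary: S)
  case 0
  then show ?case by (cases "{1..K} = S") auto
next
  case (Suc r)
  have cmr[measurable]: "(\<lambda>\<omega>. \<omega> (r, i, j)) \<in> borel_measurable N" for i j
    using Suc.prems[of "(r,i,j)"] by simp
  have IH: "{\<omega>\<in>space N. shvv_set K n \<omega> r = S0} \<in> sets N" for S0
    using Suc.IH[of S0] Suc.prems by simp
  have eq: "{\<omega>\<in>space N. shvv_set K n \<omega> (Suc r) = S} = (\<Union>S0\<in>Pow {1..K}.
      {\<omega>\<in>space N. shvv_set K n \<omega> r = S0} \<inter>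
      {\<omega>\<in>space N. halve S0 (\<lambda>i. emp_var (\<lambda>j. \<omega> (r, i, j)) (pulls K n (card S0))) = S})"
    using shvv_sub[of K n _ r] by (auto simp: Let_def)
  have hm: "{\<omega>\<in>space N. halve S0 (\<lambda>i. emp_var (\<lambda>j. \<omega> (r, i, j)) t) = S} \<in> sets N" if "S0 \<in> Pow {1..K}" for S0 t
  proof (rule halve_eq_sets)
    show "finite S0" using that finite_subset by auto
    show "(\<lambda>\<omega>. emp_var (\<lambda>j. \<omega> (r, i, j)) t) \<in> borel_measurable N" for i
      unfolding emp_var_def Let_def by measurable
  qed
  show ?case unfolding eq
    by (intro sets.finite_UN sets.Int IH hm) auto
qed

lemma shvv_pred_sets:
  assumes cm: "\<And>idx. fst idx < r \<Longrightarrow> (\<lambda>\<omega>. \<omega> idx) \<in> borel_measurable N"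
  shows "{\<omega>\<in>space N. P (shvv_set K n \<omega> r)} \<in> sets N"
proof -
  have "{\<omega>\<in>space N. P (shvv_set K n \<omega> r)} = (\<Union>S\<in>{S. S \<subseteq> {1..K} \<and> P S}. {\<omega>\<in>space N. shvv_set K n \<omega> r = S})"
    using shvv_sub[of K n _ r] by auto
  also have "\<dots> \<in> sets N"
    by (intro sets.finite_UN shvv_eq_sets[OF cm]) auto
  finally show ?thesis .
qed

context shvv begin

lemma indep_rounds:
  assumes B1: "B1 \<in> sets (PiM {idx. fst idx < r} (\<lambda>_. borel))"
      and B2: "B2 \<in> sets (PiM {idx. fst idx = r} (\<lambda>_. borel))"
  shows "Mp.prob {\<omega>\<in>space M. restrict \<omega> {idx. fst idx < r} \<in> B1 \<and> restrict \<omega> {idx. fst idx = r} \<in> B2}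
       = Mp.prob {\<omega>\<in>space M. restrict \<omega> {idx. fst idx < r} \<in> B1} * Mp.prob {\<omega>\<in>space M. restrict \<omega> {idx. fst idx = r} \<in> B2}"
proof -
  define Kb where "Kb = (\<lambda>b::bool. if b then {idx :: nat\<times>nat\<times>nat. fst idx < r} else {idx. fst idx = r})"
  have disj: "disjoint_family_on Kb UNIV"
    unfolding disjoint_family_on_def Kb_def by auto
  have ind: "Mp.indep_vars (\<lambda>b. PiM (Kb b) (\<lambda>_. borel)) (\<lambda>b \<omega>. restrict (\<lambda>i. \<omega> i) (Kb b)) UNIV"
    by (rule Mp.indep_vars_restrict[OF coord_indep _ disj]) auto
  define Ab where "Ab = (\<lambda>b::bool. if b then B1 else B2)"
  have "Mp.prob (\<Inter>b\<in>UNIV. (\<lambda>\<omega>. restrict (\<lambda>i. \<omega> i) (Kb b)) -` Ab b \<inter> space M)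
      = (\<Prod>b\<in>UNIV. Mp.prob ((\<lambda>\<omega>. restrict (\<lambda>i. \<omega> i) (Kb b)) -` Ab b \<inter> space M))"
    by (rule Mp.indep_varsD_finite[OF ind]) (auto simp: Ab_def Kb_def B1 B2)
  then show ?thesis
    by (simp add: UNIV_bool Ab_def Kb_def Int_def Collect_conj_eq[symmetric] vimage_def mult.commute conj_commute M_space)
qed

end

lemma msz_pos: "K \<ge> 1 \<Longrightarrow> msz K r \<ge> 1"
  by (induction r) auto

lemma msz_le: "msz K r \<le> K"
  by (induction r) auto

lemma Aprime_J:
  assumes "A \<subseteq> {1..K}" shows "Aprime A q \<subseteq> {2..K}"
proof
  fix x assume x: "x \<in> Aprime A q"
  then have "x \<in> A" "x \<noteq> 1" using Aprime_sub by auto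
  then have "1 \<le> x" "x \<le> K" "x \<noteq> 1" using assms by auto
  then show "x \<in> {2..K}" by simp
qed

context shvv begin

lemma round_bound:
  assumes eps: "\<And>j. j \<in> {q+2..K} \<Longrightarrow> Mp.prob {\<omega>\<in>space M. emp_var (\<lambda>a. \<omega> (r,1,a)) t \<le> emp_var (\<lambda>a. \<omega> (r,j,a)) t} \<le> \<epsilon>"
    and epos: "\<epsilon> \<ge> 0"
    and m_def: "m = msz K r" and t_def: "t = pulls K n m" and q_def: "q = m div 4"
  shows "Mp.prob {\<omega>\<in>space M. 1 \<in> shvv_set K n \<omega> r \<and> 1 \<notin> shvv_set K n \<omega> (Suc r)} \<le> 3 * \<epsilon>"
proof -
  define c where "c = (m + 1) div 2"
  define J where "J = {2..K}"
  define A where "A = (\<lambda>\<omega>. shvv_set K n \<omega> r)"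
  define v where "v = (\<lambda>(\<omega>::nat\<times>nat\<times>nat \<Rightarrow> real) (i::nat). emp_var (\<lambda>a. \<omega> (r,i,a)) t)"
  define E1 where "E1 = (\<lambda>j. {\<omega>\<in>space M. j \<in> Aprime (A \<omega>) q})"
  define E2 where "E2 = (\<lambda>j. {\<omega>\<in>space M. v \<omega> 1 \<le> v \<omega> j})"
  define Err where "Err = {\<omega>\<in>space M. 1 \<in> shvv_set K n \<omega> r \<and> 1 \<notin> shvv_set K n \<omega> (Suc r)}"
  have m1: "m \<ge> 1" using msz_pos[of K r] K2 m_def by simp
  have h1: "4 * (m div 4) \<le> m" by simp
  have h2: "m \<le> 2 * ((m+1) div 2)" by simp
  have cq: "q < c" and c3: "m - 1 - q \<le> 3 * (c - q)" and qm: "q \<le> m - 1"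
    using m1 h1 h2 unfolding c_def q_def by arith+
  have cmM: "(\<lambda>\<omega>. \<omega> idx) \<in> borel_measurable M" for idx by simp
  have E1m: "E1 j \<in> sets M" for j
    unfolding E1_def A_def by (rule shvv_pred_sets) simp
  have E2m: "E2 j \<in> sets M" for j
    unfolding E2_def v_def by measurable
  have Errm: "Err \<in> sets M"
  proof -
    have eq: "Err = {\<omega>\<in>space M. 1 \<in> shvv_set K n \<omega> r} \<inter> {\<omega>\<in>space M. 1 \<notin> shvv_set K n \<omega> (Suc r)}"
      unfolding Err_def by blast
    have s1: "{\<omega>\<in>space M. 1 \<in> shvv_set K n \<omega> r} \<in> sets M" by (rule shvv_pred_sets) simp
    have s2: "{\<omega>\<in>space M. 1 \<notin> shvv_set K n \<omega> (Suc r)} \<in> sets M" by (rule shvv_pred_sets) simp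
    show ?thesis unfolding eq by (rule sets.Int[OF s1 s2])
  qed
  have finJ: "finite J" unfolding J_def by simp
    have count: "real (c - q) * indicator Err \<omega> \<le> (\<Sum>j\<in>J. indicator (E1 j \<inter> E2 j) \<omega>)" for \<omega>
  proof (cases "\<omega> \<in> Err")
    case False then show ?thesis by (simp add: sum_nonneg)
  next
    case True
    have sub: "A \<omega> \<subseteq> {1..K}" unfolding A_def by (rule shvv_sub)
    have finA: "finite (A \<omega>)" using sub finite_subset by blast
    have one: "1 \<in> A \<omega>" using True by (simp add: Err_def A_def)
    have cardA: "card (A \<omega>) = m" unfolding A_def m_def by (rule shvv_card)
    have "1 \<notin> halve (A \<omega>) (v \<omega>)"
      using True cardA by (simp add: Err_def A_def v_def t_def Let_def)
    from halve_elim[OF one sub this]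
    have cW: "c \<le> card {j \<in> A \<omega> - {1}. v \<omega> 1 \<le> v \<omega> j}" unfolding c_def cardA .
    have "card {j \<in> A \<omega> - {1}. v \<omega> 1 \<le> v \<omega> j} \<le> card ({j \<in> A \<omega> - {1}. v \<omega> 1 \<le> v \<omega> j} \<inter> Aprime (A \<omega>) q) + q"
      by (rule W_Aprime[OF finA one]) auto
    also have "card ({j \<in> A \<omega> - {1}. v \<omega> 1 \<le> v \<omega> j} \<inter> Aprime (A \<omega>) q) \<le> card {j\<in>J. \<omega> \<in> E1 j \<inter> E2 j}"
      by (rule card_mono) (use finJ sub Aprime_sub[of "A \<omega>" q] in \<open>auto simp: J_def E1_def E2_def M_space\<close>)
    finally have "c - q \<le> card {j\<in>J. \<omega> \<in> E1 j \<inter> E2 j}" using cW by linarith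
    then have "real (c - q) \<le> real (card {j\<in>J. \<omega> \<in> E1 j \<inter> E2 j})" by simp
    also have "\<dots> = (\<Sum>j\<in>J. indicator (E1 j \<inter> E2 j) \<omega>)"
      using sum.inter_filter[OF finJ, of "\<lambda>_. 1::real" "\<lambda>j. \<omega> \<in> E1 j \<inter> E2 j"] by (simp add: indicator_def of_bool_def)
    finally show ?thesis using True by simp
  qed
  have intE: "integrable M (indicator E :: _ \<Rightarrow> real)" if "E \<in> sets M" for E
    using that by (intro integrable_real_indicator) (auto simp: Mp.emeasure_eq_measure)
  have step1: "real (c - q) * Mp.prob Err \<le> (\<Sum>j\<in>J. Mp.prob (E1 j \<inter> E2 j))"
  proof -
    have "real (c - q) * Mp.prob Err = (\<integral>\<omega>. real (c - q) * indicator Err \<omega> \<partial>M)"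
      using Errm by (simp add: Int_absorb2 sets.sets_into_space)
    also have "\<dots> \<le> (\<integral>\<omega>. (\<Sum>j\<in>J. indicator (E1 j \<inter> E2 j) \<omega>) \<partial>M)"
      by (rule Bochner_Integration.integral_mono) (auto intro!: intE E1m E2m Errm count)
    also have "\<dots> = (\<Sum>j\<in>J. Mp.prob (E1 j \<inter> E2 j))"
      by (subst Bochner_Integration.integral_sum[where f="\<lambda>j. indicator (E1 j \<inter> E2 j)" and I=J]) (auto intro!: intE E1m E2m simp: Int_absorb2 sets.sets_into_space M_space)
    finally show ?thesis .
  qed
    have indep: "Mp.prob (E1 j \<inter> E2 j) = Mp.prob (E1 j) * Mp.prob (E2 j)" for j
  proof -
    define K0 where "K0 = {idx :: nat\<times>nat\<times>nat. fst idx < r}"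
    define K1 where "K1 = {idx :: nat\<times>nat\<times>nat. fst idx = r}"
    define B1 where "B1 = {f \<in> space (PiM K0 (\<lambda>_. borel)). j \<in> Aprime (shvv_set K n f r) q}"
    define B2 where "B2 = {f \<in> space (PiM K1 (\<lambda>_. borel)). v f 1 \<le> v f j}"
    have B1m: "B1 \<in> sets (PiM K0 (\<lambda>_. borel))"
      unfolding B1_def by (rule shvv_pred_sets) (auto simp: K0_def intro!: measurable_component_singleton)
    have cm1[measurable]: "(\<lambda>f. f (r, i, a)) \<in> borel_measurable (PiM K1 (\<lambda>_. borel))" for i a
      by (rule measurable_component_singleton) (simp add: K1_def)
    have B2m: "B2 \<in> sets (PiM K1 (\<lambda>_. borel))"
      unfolding B2_def v_def emp_var_def Let_def by measurable
    have r0: "restrict \<omega> K0 \<in> B1 \<longleftrightarrow> \<omega> \<in> E1 j" for \<omega>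
    proof -
      have "shvv_set K n (restrict \<omega> K0) r = shvv_set K n \<omega> r"
        by (rule shvv_local) (simp add: K0_def)
      then show ?thesis by (simp add: B1_def E1_def A_def space_PiM M_space)
    qed
    have r1: "restrict \<omega> K1 \<in> B2 \<longleftrightarrow> \<omega> \<in> E2 j" for \<omega>
    proof -
      have "v (restrict \<omega> K1) i = v \<omega> i" for i by (simp add: v_def K1_def)
      then show ?thesis by (simp add: B2_def E2_def space_PiM M_space)
    qed
    have "Mp.prob {\<omega>\<in>space M. restrict \<omega> K0 \<in> B1 \<and> restrict \<omega> K1 \<in> B2}
       = Mp.prob {\<omega>\<in>space M. restrict \<omega> K0 \<in> B1} * Mp.prob {\<omega>\<in>space M. restrict \<omega> K1 \<in> B2}"
      using indep_rounds[of B1 r B2] B1m B2m unfolding K0_def K1_def by simp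
    moreover have "{\<omega>\<in>space M. restrict \<omega> K0 \<in> B1 \<and> restrict \<omega> K1 \<in> B2} = E1 j \<inter> E2 j"
      using r0 r1 by (auto simp: E1_def E2_def)
    moreover have "{\<omega>\<in>space M. restrict \<omega> K0 \<in> B1} = E1 j" using r0 by (auto simp: E1_def)
    moreover have "{\<omega>\<in>space M. restrict \<omega> K1 \<in> B2} = E2 j" using r1 by (auto simp: E2_def)
    ultimately show ?thesis by simp
  qed
  have step2: "Mp.prob (E1 j \<inter> E2 j) \<le> Mp.prob (E1 j) * \<epsilon>" if "j \<in> J" for j
  proof (cases "q + 2 \<le> j")
    case True
    have "Mp.prob (E2 j) \<le> \<epsilon>" using eps[of j] True that by (simp add: J_def E2_def v_def)
    then show ?thesis unfolding indep by (intro mult_left_mono) auto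
  next
    case False
    have "E1 j = {}" using False Aprime_ge[OF shvv_sub[of K n _ r]] by (force simp: E1_def A_def)
    then show ?thesis by simp
  qed
  have step3: "(\<Sum>j\<in>J. Mp.prob (E1 j)) \<le> real (m - 1 - q)"
  proof -
    have "(\<Sum>j\<in>J. Mp.prob (E1 j)) = (\<integral>\<omega>. (\<Sum>j\<in>J. indicator (E1 j) \<omega>) \<partial>M)"
      by (subst Bochner_Integration.integral_sum[where f="\<lambda>j. indicator (E1 j)" and I=J]) (auto intro!: intE E1m simp: Int_absorb2 sets.sets_into_space M_space)
    also have "\<dots> \<le> (\<integral>\<omega>. real (m - 1 - q) \<partial>M)"
    proof (rule Bochner_Integration.integral_mono)
      show "integrable M (\<lambda>\<omega>. \<Sum>j\<in>J. indicator (E1 j) \<omega> :: real)" by (auto intro!: intE E1m)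
      show "integrable M (\<lambda>\<omega>. real (m - 1 - q))" by simp
      fix \<omega> assume "\<omega> \<in> space M"
      have sub: "A \<omega> \<subseteq> {1..K}" unfolding A_def by (rule shvv_sub)
      have finA: "finite (A \<omega>)" using sub finite_subset by blast
      have cardA: "card (A \<omega>) = m" unfolding A_def m_def by (rule shvv_card)
      have "(\<Sum>j\<in>J. indicator (E1 j) \<omega> :: real) = real (card {j\<in>J. \<omega> \<in> E1 j})"
        using sum.inter_filter[OF finJ, of "\<lambda>_. 1::real" "\<lambda>j. \<omega> \<in> E1 j"] by (simp add: indicator_def of_bool_def)
      also have "{j\<in>J. \<omega> \<in> E1 j} = Aprime (A \<omega>) q"
        using Aprime_J[OF sub, of q] by (auto simp: J_def E1_def M_space)
      also have "card (Aprime (A \<omega>) q) \<le> m - 1 - q"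
        using Aprime_card_le[OF finA, of q] cardA qm by simp
      finally show "(\<Sum>j\<in>J. indicator (E1 j) \<omega> :: real) \<le> real (m - 1 - q)" by simp
    qed
    also have "\<dots> = real (m - 1 - q)" by (simp add: Mp.prob_space)
    finally show ?thesis .
  qed
  have "real (c - q) * Mp.prob Err \<le> (\<Sum>j\<in>J. Mp.prob (E1 j) * \<epsilon>)"
    using step1 sum_mono[of J "\<lambda>j. Mp.prob (E1 j \<inter> E2 j)" "\<lambda>j. Mp.prob (E1 j) * \<epsilon>", OF step2] by linarith
  also have "\<dots> = (\<Sum>j\<in>J. Mp.prob (E1 j)) * \<epsilon>" by (simp add: sum_distrib_right)
  also have "\<dots> \<le> real (m - 1 - q) * \<epsilon>" by (rule mult_right_mono[OF step3 epos])
  also have "\<dots> \<le> real (3 * (c - q)) * \<epsilon>" by (rule mult_right_mono) (use c3 epos in simp_all)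
  finally have "real (c - q) * Mp.prob Err \<le> real (c - q) * (3 * \<epsilon>)" by simp
  then have "Mp.prob Err \<le> 3 * \<epsilon>" using cq by (simp add: mult_le_cancel_left)
  then show ?thesis unfolding Err_def .
qed

end

lemma final_arith:
  fixes n a Y L R :: real
  assumes a: "a > 0" and na: "a \<le> n" and Ya: "a \<le> Y" and L1: "L \<ge> 1" and RL: "R \<le> L + 1" and R0: "R \<ge> 0"
    and B: "3 * L * exp (- (n - a)\<^sup>2 / (8 * n * Y)) < 1"
  shows "3 * R * exp (- (n - 2 * a) / (4 * Y)) \<le> 3 * L * exp (- (n - a)\<^sup>2 / (8 * n * Y))"
proof -
  have npos: "n > 0" and Ypos: "Y > 0" using a na Ya by auto
  define E where "E = (n - a)\<^sup>2 / (8 * n * Y)"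
  define z where "z = n / (8 * Y)"
  define X where "X = (n - 2 * a) / (4 * Y)"
  have "(n - a)\<^sup>2 \<le> n\<^sup>2" using na a by (intro power_mono) auto
  then have Ez: "E \<le> z" unfolding E_def z_def using npos Ypos
    by (simp add: divide_right_mono power2_eq_square field_simps)
  have B': "3 * L * exp (- E) < 1" using B unfolding E_def minus_divide_left .
  have "exp (- E) < 1 / (3 * L)" using B' L1 by (simp add: field_simps)
  then have "exp E > 3 * L" using L1 by (simp add: exp_minus field_simps)
  then have expE: "exp E > 3" using L1 by linarith
  then have expz: "exp z > 3" using Ez by (meson exp_le_cancel_iff less_le_trans)
  have z1: "z > 1"
  proof (rule ccontr)
    assume "\<not> z > 1"
    then have "exp z \<le> exp 1" by simp
    then show False using exp_le expz by linarith
  qed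
  have n8a: "8 * a \<le> n" using z1 Ya Ypos unfolding z_def by (simp add: field_simps)
  have XE: "X - E = (n\<^sup>2 - 2 * a * n - a\<^sup>2) / (8 * n * Y)"
    unfolding X_def E_def using npos Ypos by (simp add: field_simps power2_eq_square)
  have "a * n \<le> n * n / 8" using n8a npos by (simp add: field_simps mult_right_mono)
  moreover have "a * a \<le> (n / 8) * (n / 8)" using n8a a by (intro mult_mono) auto
  ultimately have "n\<^sup>2 - 2 * a * n - a\<^sup>2 \<ge> 47 / 64 * n\<^sup>2" by (simp add: power2_eq_square field_simps)
  then have "X - E \<ge> (47 / 64 * n\<^sup>2) / (8 * n * Y)" unfolding XE using npos Ypos
    by (intro divide_right_mono) auto
  also have "(47 / 64 * n\<^sup>2) / (8 * n * Y) = 47 / 64 * z" unfolding z_def using npos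
    by (simp add: power2_eq_square field_simps)
  finally have XEz: "X - E \<ge> 47 / 64 * z" .
  have "(2::real) ^ 64 < 3 ^ 47" by simp
  also have "(3::real) ^ 47 < exp z ^ 47" using expz by (intro power_strict_mono) auto
  also have "exp z ^ 47 = exp (47 / 64 * z) ^ 64"
    by (simp add: exp_of_nat_mult[symmetric])
  finally have "exp (47 / 64 * z) ^ 64 > 2 ^ 64" .
  then have "exp (47 / 64 * z) > 2" by (rule power_less_imp_less_base) simp
  then have exp2: "exp (X - E) \<ge> 2" using XEz by (meson exp_le_cancel_iff less_le_trans less_imp_le)
  have "3 * R * exp (- X) = 3 * R * exp (- E) / exp (X - E)"
    by (simp add: exp_diff exp_minus field_simps)
  also have "\<dots> \<le> 3 * R * exp (- E) / 2"
    using exp2 R0 by (intro divide_left_mono) auto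
  also have "\<dots> \<le> 3 * L * exp (- E)"
    using RL L1 by (simp add: field_simps)
  finally show ?thesis unfolding X_def E_def minus_divide_left .
qed


lemma first_drop: "P 0 \<Longrightarrow> \<not> P R \<Longrightarrow> \<exists>r<R. P r \<and> \<not> P (Suc r)"
proof (induction R)
  case (Suc R)
  show ?case
  proof (cases "P R")
    case True then show ?thesis using Suc.prems by blast
  next
    case False
    then obtain r where "r < R" "P r" "\<not> P (Suc r)" using Suc.IH Suc.prems by blast
    then show ?thesis using less_SucI by blast
  qed
qed simp

context shvv begin

lemma arm_var_nonneg: "arm_var D i \<ge> 0"
  unfolding arm_var_def by simp

lemma arm_var_le1: "i \<in> {1..K} \<Longrightarrow> arm_var D i \<le> 1"
proof -
  assume i: "i \<in> {1..K}"
  interpret Di: prob_space "D i" using prob[OF i] .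
  have "(\<integral>x. x\<^sup>2 \<partial>D i) \<le> (\<integral>x. 1 \<partial>D i)"
    by (rule integral_mono_AE[OF D_int_x2[OF i]]) (auto intro!: eventually_mono[OF supp[OF i]] simp: abs_square_le_1 power_le_one)
  then have "(\<integral>x. x\<^sup>2 \<partial>D i) \<le> 1" by (simp add: Di.prob_space)
  then show ?thesis using arm_var_eq[OF i] by (smt (verit) zero_le_power2)
qed

lemma Err_sets: "{\<omega>\<in>space M. 1 \<in> shvv_set K n \<omega> r \<and> 1 \<notin> shvv_set K n \<omega> (Suc r)} \<in> sets M"
proof -
  have eq: "{\<omega>\<in>space M. 1 \<in> shvv_set K n \<omega> r \<and> 1 \<notin> shvv_set K n \<omega> (Suc r)}
     = {\<omega>\<in>space M. 1 \<in> shvv_set K n \<omega> r} \<inter> {\<omega>\<in>space M. 1 \<notin> shvv_set K n \<omega> (Suc r)}"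
    by blast
  have s1: "{\<omega>\<in>space M. 1 \<in> shvv_set K n \<omega> r} \<in> sets M" by (rule shvv_pred_sets) simp
  have s2: "{\<omega>\<in>space M. 1 \<notin> shvv_set K n \<omega> (Suc r)} \<in> sets M" by (rule shvv_pred_sets) simp
  show ?thesis unfolding eq by (rule sets.Int[OF s1 s2])
qed

theorem main:
  assumes best: "arm_var D 1 > arm_var D 2"
    and sorted: "\<And>i. i \<in> {2..<K} \<Longrightarrow> arm_var D (Suc i) \<le> arm_var D i"
    and budget: "real K * log 2 (real K) \<le> real n"
  shows "measure M {\<omega> \<in> space M. shvv_out K n \<omega> \<noteq> 1}
     \<le> 3 * log 2 (real K) * exp (- (real n - real K * log 2 (real K))\<^sup>2
          / (8 * real n * log 2 (real K)
             * Max ((\<lambda>i. real i / (arm_var D 1 - arm_var D i)\<^sup>2) ` {2..K})))"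
proof -
  define L where "L = log 2 (real K)"
  define H where "H = Max ((\<lambda>i. real i / (arm_var D 1 - arm_var D i)\<^sup>2) ` {2..K})"
  define R where "R = nat \<lceil>L\<rceil>"
  define a where "a = real K * L"
  define Y where "Y = L * H"
  define X where "X = (real n - 2 * a) / (4 * Y)"
  define Err where "Err = (\<lambda>r. {\<omega>\<in>space M. 1 \<in> shvv_set K n \<omega> r \<and> 1 \<notin> shvv_set K n \<omega> (Suc r)})"
  have Kpos: "real K > 0" using K2 by simp
  have L1: "L \<ge> 1" unfolding L_def using K2 by simp
  have apos: "a > 0" unfolding a_def using L1 Kpos by simp
  have na: "a \<le> real n" using budget unfolding a_def L_def .
    have le2: "arm_var D j \<le> arm_var D 2" if "j \<in> {2..K}" for j
    using that
  proof (induction j)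
    case (Suc j)
    show ?case
    proof (cases "Suc j = 2")
      case False
      then have j: "j \<in> {2..<K}" "j \<in> {2..K}" using Suc.prems by auto
      then show ?thesis using sorted[OF j(1)] Suc.IH[OF j(2)] by linarith
    qed (simp add: numeral_2_eq_2)
  qed simp
  have dpos: "arm_var D 1 - arm_var D j > 0" if "j \<in> {2..K}" for j
    using le2[OF that] best by linarith
  have finS: "finite ((\<lambda>i. real i / (arm_var D 1 - arm_var D i)\<^sup>2) ` {2..K})" by simp
  have Hge: "real j / (arm_var D 1 - arm_var D j)\<^sup>2 \<le> H" if "j \<in> {2..K}" for j
    unfolding H_def using that by (intro Max_ge finS) auto
  have KK: "K \<in> {2..K}" using K2 by simp
  have "real K \<le> real K / (arm_var D 1 - arm_var D K)\<^sup>2"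
  proof -
    have d1: "arm_var D 1 - arm_var D K \<le> 1" using arm_var_le1[of 1] arm_var_nonneg[of K] K2 by simp
    have "(arm_var D 1 - arm_var D K)\<^sup>2 \<le> 1" using d1 dpos[OF KK] by (simp add: power_le_one)
    moreover have "(arm_var D 1 - arm_var D K)\<^sup>2 > 0" using dpos[OF KK] by simp
    ultimately show ?thesis using Kpos by (simp add: field_simps)
  qed
  then have HK: "H \<ge> real K" using Hge[OF KK] by linarith
  have Hpos: "H > 0" using HK Kpos by linarith
  have dsq: "(arm_var D 1 - arm_var D j)\<^sup>2 \<ge> real j / H" if "j \<in> {2..K}" for j
  proof -
    have "real j / (arm_var D 1 - arm_var D j)\<^sup>2 \<le> H" by (rule Hge[OF that])
    moreover have "(arm_var D 1 - arm_var D j)\<^sup>2 > 0" using dpos[OF that] by simp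
    ultimately show ?thesis using Hpos by (simp add: field_simps)
  qed
  have Ya: "a \<le> Y" unfolding a_def Y_def using HK L1 by (simp add: mult.commute mult_left_mono)
  have Ypos: "Y > 0" unfolding Y_def using L1 Hpos by simp
    have round: "Mp.prob (Err r) \<le> 3 * exp (- X)" for r
  proof -
    define m where "m = msz K r"
    define t where "t = pulls K n m"
    define q where "q = m div 4"
    have m1: "m \<ge> 1" using msz_pos[of K r] K2 m_def by simp
    have mK: "m \<le> K" using msz_le[of K r] m_def by simp
    define x where "x = real n / (real m * L)"
    have mL: "real m * L > 0" using m1 L1 by simp
    have x1: "x \<ge> 1"
    proof -
      have "real m * L \<le> real K * L" using mK L1 by (intro mult_right_mono) auto
      then have "real m * L \<le> real n" using na unfolding a_def by linarith
      then show ?thesis unfolding x_def using mL by (simp add: field_simps)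
    qed
    have tx: "real t = of_int \<lfloor>x\<rfloor>" unfolding t_def pulls_def x_def L_def[symmetric]
      using x1 x_def by (simp add: L_def)
    have t1: "real t \<ge> 1" using tx x1 by simp
    have tgt: "real t > x - 1" using tx floor_correct[of x] by linarith
    have q4: "real (q + 2) \<ge> real m / 4" unfolding q_def by linarith
    define \<epsilon> where "\<epsilon> = exp (- ((real t - 1) * real (q + 2) / H))"
    have eps: "Mp.prob {\<omega>\<in>space M. emp_var (\<lambda>a. \<omega> (r,1,a)) t \<le> emp_var (\<lambda>a. \<omega> (r,j,a)) t} \<le> \<epsilon>"
      if j: "j \<in> {q+2..K}" for j
    proof -
      have j1: "j \<in> {1..K}" "j \<in> {2..K}" using j by auto
      have "Mp.prob {\<omega>\<in>space M. emp_var (\<lambda>a. \<omega> (r,1,a)) t \<le> emp_var (\<lambda>a. \<omega> (r,j,a)) t}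
          \<le> exp (- 2 * real (t div 2) * (arm_var D 1 - arm_var D j)\<^sup>2)"
        by (rule conc[OF j1(1)]) (use dpos[OF j1(2)] in simp)
      also have "\<dots> \<le> \<epsilon>"
        unfolding \<epsilon>_def
      proof (rule exp_le_cancel_iff[THEN iffD2])
        have a1: "2 * real (t div 2) \<ge> real t - 1" by linarith
        have "(real t - 1) * real (q + 2) / H = (real t - 1) * (real (q + 2) / H)" by simp
        also have "\<dots> \<le> (real t - 1) * (arm_var D 1 - arm_var D j)\<^sup>2"
        proof (rule mult_left_mono)
          have "real (q + 2) \<le> real j" using j by simp
          then have "real (q + 2) / H \<le> real j / H" using Hpos by (simp add: divide_right_mono)
          then show "real (q + 2) / H \<le> (arm_var D 1 - arm_var D j)\<^sup>2" using dsq[OF j1(2)] by linarith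
        qed (use t1 in simp)
        also have "\<dots> \<le> 2 * real (t div 2) * (arm_var D 1 - arm_var D j)\<^sup>2"
          using a1 by (intro mult_right_mono) auto
        finally show "- 2 * real (t div 2) * (arm_var D 1 - arm_var D j)\<^sup>2 \<le> - ((real t - 1) * real (q + 2) / H)"
          by simp
      qed
      finally show ?thesis .
    qed
    have "Mp.prob (Err r) \<le> 3 * \<epsilon>"
      unfolding Err_def by (rule round_bound[OF eps _ m_def t_def q_def]) (simp_all add: \<epsilon>_def)
    also have "\<epsilon> \<le> exp (- X)"
      unfolding \<epsilon>_def
    proof (rule exp_le_cancel_iff[THEN iffD2])
      have "(real t - 1) * real (q + 2) \<ge> (real t - 1) * (real m / 4)"
        using t1 q4 by (intro mult_left_mono) auto
      moreover have "(real t - 1) * (real m / 4) \<ge> (x - 2) * (real m / 4)"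
        using tgt m1 by (intro mult_right_mono) auto
      moreover have "(x - 2) * (real m / 4) = real n / (4 * L) - real m / 2"
        unfolding x_def using mL L1 m1 by (simp add: field_simps)
      moreover have "real n / (4 * L) - real m / 2 \<ge> real n / (4 * L) - real K / 2" using mK by simp
      moreover have "X * H = real n / (4 * L) - real K / 2"
        unfolding X_def Y_def a_def using L1 Hpos by (simp add: field_simps)
      ultimately have "X * H \<le> (real t - 1) * real (q + 2)" by linarith
      then have "X \<le> (real t - 1) * real (q + 2) / H" using Hpos by (simp add: field_simps)
      then show "- ((real t - 1) * real (q + 2) / H) \<le> - X" by simp
    qed
    then have "3 * \<epsilon> \<le> 3 * exp (- X)" by simp
    finally show ?thesis .
  qed
    have incl: "{\<omega> \<in> space M. shvv_out K n \<omega> \<noteq> 1} \<subseteq> (\<Union>r\<in>{..<R}. Err r)"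
  proof
    fix \<omega> assume w: "\<omega> \<in> {\<omega> \<in> space M. shvv_out K n \<omega> \<noteq> 1}"
    have "1 \<notin> shvv_set K n \<omega> R"
    proof
      assume one: "1 \<in> shvv_set K n \<omega> R"
      have sub: "shvv_set K n \<omega> R \<subseteq> {1..K}" by (rule shvv_sub)
      have "Min (shvv_set K n \<omega> R) = 1"
        by (rule Min_eqI) (use sub one finite_subset in auto)
      then show False using w by (simp add: shvv_out_def R_def L_def)
    qed
    moreover have "1 \<in> shvv_set K n \<omega> 0" using K2 by simp
    ultimately obtain r where "r < R" "1 \<in> shvv_set K n \<omega> r" "1 \<notin> shvv_set K n \<omega> (Suc r)"
      using first_drop[of "\<lambda>r. 1 \<in> shvv_set K n \<omega> r" R] by blast
    then show "\<omega> \<in> (\<Union>r\<in>{..<R}. Err r)" using w by (auto simp: Err_def)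
  qed
  have Errm: "Err r \<in> sets M" for r unfolding Err_def by (rule Err_sets)
  have "measure M {\<omega> \<in> space M. shvv_out K n \<omega> \<noteq> 1} \<le> measure M (\<Union>r\<in>{..<R}. Err r)"
    by (rule Mp.finite_measure_mono[OF incl]) (auto intro!: sets.finite_UN Errm)
  also have "\<dots> \<le> (\<Sum>r\<in>{..<R}. Mp.prob (Err r))"
    by (rule Mp.finite_measure_subadditive_finite) (auto intro: Errm)
  also have "\<dots> \<le> (\<Sum>r\<in>{..<R}. 3 * exp (- X))" by (rule sum_mono) (rule round)
  also have "\<dots> = 3 * real R * exp (- X)" by simp
  finally have P: "measure M {\<omega> \<in> space M. shvv_out K n \<omega> \<noteq> 1} \<le> 3 * real R * exp (- X)" .
  define B where "B = 3 * L * exp (- (real n - a)\<^sup>2 / (8 * real n * Y))"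
  have "measure M {\<omega> \<in> space M. shvv_out K n \<omega> \<noteq> 1} \<le> B"
  proof (cases "B < 1")
    case True
    have RL: "real R \<le> L + 1" unfolding R_def using L1 by linarith
    have "3 * real R * exp (- (real n - 2 * a) / (4 * Y)) \<le> B"
      unfolding B_def by (rule final_arith[OF apos na Ya L1 RL _ True[unfolded B_def]]) simp
    then show ?thesis using P unfolding X_def minus_divide_left by simp
  next
    case False
    have "Mp.prob {\<omega> \<in> space M. shvv_out K n \<omega> \<noteq> 1} \<le> 1" by (rule Mp.prob_le_1)
    then show ?thesis using False by linarith
  qed
  then show ?thesis unfolding B_def Y_def a_def L_def H_def by (simp add: mult.assoc)
qed

end

theorem theorem3:
  fixes K n :: nat and D :: "nat \<Rightarrow> real measure"
  assumes K2: "K \<ge> 2"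
    and prob: "\<And>i. i \<in> {1..K} \<Longrightarrow> prob_space (D i)"
    and borel: "\<And>i. i \<in> {1..K} \<Longrightarrow> sets (D i) = sets borel"
    and supp: "\<And>i. i \<in> {1..K} \<Longrightarrow> AE x in D i. x \<in> {0..1}"
    and best: "arm_var D 1 > arm_var D 2"
    and sorted: "\<And>i. i \<in> {2..<K} \<Longrightarrow> arm_var D (Suc i) \<le> arm_var D i"
    and budget: "real K * log 2 (real K) \<le> real n"
  shows "measure (sample_space K D) {\<omega> \<in> space (sample_space K D). shvv_out K n \<omega> \<noteq> 1}
     \<le> 3 * log 2 (real K) * exp (- (real n - real K * log 2 (real K))\<^sup>2
          / (8 * real n * log 2 (real K)
             * Max ((\<lambda>i. real i / (arm_var D 1 - arm_var D i)\<^sup>2) ` {2..K})))"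
  proof -
  have loc: "shvv K D" unfolding shvv_def using K2 prob borel supp by blast
  show ?thesis by (rule shvv.main[OF loc best sorted budget])
qed

end
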